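(* Under Algorithm 2(a) below (with field size $q>n$), in every slot $t$, the size $Q(t)$ of the sender's queue after the arrivals of slot $t$ have been appended (end of Step 3) satisfies $$Q(t)\le \sum_{j=1}^n\big(\dim V(t)-\dim V_j(t)\big),$$ where $V(t)=\mathbb{F}_q^{A(t)}$ is the sender's knowledge space, $A(t)$ is the total number of arrivals up to and including slot $t$, and $V_j(t)$ is receiver $j$'s knowledge space at that time. That is, the physical queue size is at most the sum over receivers of the backlog in degrees of freedom between the sender and that receiver.
   Context: Model: a sender broadcasts to $n$ receivers over a slotted packet erasure broadcast channel; packets are vectors over $\mathbb{F}_q$, indexed by arrival order; each slot some packets may arrive at the sender (just after the slot begins); the sender transmits at most one linear combination of its stored packets per slot; each receiver either receives it or suffers an erasure, and the sender learns via perfect feedback before the end of the slot which receivers received it. The knowledge space of a node is the space of global coefficient vectors (with respect to all original packets arrived so far) of linear combinations it can compute. Algorithm 2(a): The sender stores queue contents $\mathbf{y}_1,\dots,\mathbf{y}_Q$ (each a linear combination of original packets) and matrices $B,B_1,\dots,B_n$ with $Q$ columns whose rows are local coefficient vectors (with respect to the current queue contents); initially all are empty. In every slot: (Step 3) if $a$ packets arrive, append them at the end of the queue, set $B=I_{Q}$ for the new queue length $Q$, and append $a$ zero columns to each $B_j$. (Step 4) If the queue is nonempty, choose $\mathbf{g}\in\mathrm{span}(B)$ with $\mathbf{g}\notin\mathrm{span}(B_j)$ for every $j$ with $\mathrm{span}(B_j)\ne\mathrm{span}(B)$ (span means row space), and transmit $\sum_i g_i\mathbf{y}_i$; otherwise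 set $\mathbf{g}=\mathbf{0}$ and transmit nothing. (Step 5) For each $j$, if $\mathbf{g}\neq\mathbf{0}$ and receiver $j$ received the transmission, append $\mathbf{g}$ as a row of $B_j$. (Step 6) Let $B_\Delta$ be a basis of $\bigcap_j\mathrm{span}(B_j)$; let $B'$ be a completion of $B_\Delta$ to a basis of $\mathrm{span}(B)$ and $B''=B'\setminus B_\Delta$; for each $j$ let $B_j'$ be a completion of $B_\Delta$ to a basis of $\mathrm{span}(B_j)$ such that $B_j'':=B_j'\setminus B_\Delta\subseteq\mathrm{span}(B'')$. (Step 7) Replace the queue contents by the packets $\sum_i h_i\mathbf{y}_i$ for $\mathbf{h}\in B''$. (Step 8) Replace each $B_j$ by the matrix $X_j$ with $B_j''=X_jB''$, and set $B=I_{|B''|}$. *)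

theory Defs
  imports Complex_Main "HOL-Library.Function_Algebras"
begin

text \<open>Vectors over the field (both global coefficient vectors, indexed by the
arrival index of original packets 0,1,2,..., and local coefficient vectors,
indexed by queue position 0,...,Q-1) are represented as functions
nat => 'a with finite support.\<close>

definition fscale :: "'a::field \<Rightarrow> (nat \<Rightarrow> 'a) \<Rightarrow> (nat \<Rightarrow> 'a)" where
  "fscale c v = (\<lambda>i. c * v i)"

abbreviation fspan :: "(nat \<Rightarrow> 'a::field) set \<Rightarrow> (nat \<Rightarrow> 'a) set" where
  "fspan \<equiv> Modules.module.span fscale"

abbreviation findep :: "(nat \<Rightarrow> 'a::field) set \<Rightarrow> bool" where
  "findep S \<equiv> \<not> Modules.module.dependent fscale S"

abbreviation fdim :: "(nat \<Rightarrow> 'a::field) set \<Rightarrow> nat" where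
  "fdim \<equiv> Vector_Spaces.vector_space.dim fscale"

definition is_basis_list :: "(nat \<Rightarrow> 'a::field) list \<Rightarrow> (nat \<Rightarrow> 'a) set \<Rightarrow> bool" where
  "is_basis_list L S \<longleftrightarrow> distinct L \<and> findep (set L) \<and> fspan (set L) = S"

definition unitv :: "nat \<Rightarrow> nat \<Rightarrow> 'a::field" where
  "unitv i = (\<lambda>k. if k = i then 1 else 0)"

definition idrows :: "nat \<Rightarrow> (nat \<Rightarrow> 'a::field) list" where
  "idrows Q = map unitv [0..<Q]"

text \<open>Linear combination sum_i h_i * L_i (row vector h times the matrix with rows L).\<close>
definition lincomb :: "(nat \<Rightarrow> 'a::field) list \<Rightarrow> (nat \<Rightarrow> 'a) \<Rightarrow> (nat \<Rightarrow> 'a)" where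
  "lincomb L h = (\<lambda>m. \<Sum>i<length L. h i * (L ! i) m)"

text \<open>Sender state at the beginning of a slot: queue contents (as global coefficient
vectors), the matrix B and the matrices B_j (lists of rows = local coefficient vectors).\<close>
record 'a alg_state =
  queue :: "(nat \<Rightarrow> 'a) list"
  Bm :: "(nat \<Rightarrow> 'a) list"
  Bj :: "nat \<Rightarrow> (nat \<Rightarrow> 'a) list"

definition init_state :: "'a alg_state" where
  "init_state = \<lparr>queue = [], Bm = [], Bj = (\<lambda>j. [])\<rparr>"

text \<open>Step 3: a packets arrive; they are original packets with arrival indices
off, ..., off+a-1 (off = number of earlier arrivals); their global coefficient
vectors are unit vectors.  Appending zero columns to B_j does not change the
rows in our representation (local vectors are zero beyond the queue length).\<close>
definition step3 :: "nat \<Rightarrow> nat \<Rightarrow> 'a::field alg_state \<Rightarrow> 'a alg_state" where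
  "step3 off a s =
     (let ys = queue s @ map unitv [off..<off + a]
      in if a > 0 then s\<lparr>queue := ys, Bm := idrows (length ys)\<rparr> else s)"

definition valid_g :: "nat \<Rightarrow> 'a::field alg_state \<Rightarrow> (nat \<Rightarrow> 'a) \<Rightarrow> bool" where
  "valid_g n s g \<longleftrightarrow>
     (if queue s \<noteq> [] then
        g \<in> fspan (set (Bm s)) \<and>
        (\<forall>j\<in>{1..n}. fspan (set (Bj s j)) \<noteq> fspan (set (Bm s)) \<longrightarrow> g \<notin> fspan (set (Bj s j)))
      else g = 0)"

definition step5 :: "nat set \<Rightarrow> (nat \<Rightarrow> 'a::field) \<Rightarrow> 'a alg_state \<Rightarrow> 'a alg_state" where
  "step5 R g s = s\<lparr>Bj := (\<lambda>j. if g \<noteq> 0 \<and> j \<in> R then Bj s j @ [g] else Bj s j)\<rparr>"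

text \<open>Steps 6--8: s is the state after Step 5, s' the state at the start of the next slot.
BD = B_Delta, B2 = B'', Bj2 j = B_j'', X j = X_j.\<close>
definition valid_steps678 :: "nat \<Rightarrow> 'a::field alg_state \<Rightarrow> 'a alg_state \<Rightarrow> bool" where
  "valid_steps678 n s s' \<longleftrightarrow>
     (\<exists>BD B2 Bj2 X.
        is_basis_list BD (\<Inter>j\<in>{1..n}. fspan (set (Bj s j))) \<and>
        is_basis_list (BD @ B2) (fspan (set (Bm s))) \<and>
        (\<forall>j\<in>{1..n}. is_basis_list (BD @ Bj2 j) (fspan (set (Bj s j))) \<and>
                      set (Bj2 j) \<subseteq> fspan (set B2)) \<and>
        (\<forall>j\<in>{1..n}. map (lincomb B2) (X j) = Bj2 j \<and>
                      (\<forall>x\<in>set (X j). \<forall>k\<ge>length B2. x k = 0)) \<and>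
        queue s' = map (lincomb (queue s)) B2 \<and>
        Bj s' = X \<and>
        Bm s' = idrows (length B2))"

text \<open>A run of Algorithm 2(a): st t is the state at the start of slot t, a t the number
of arrivals in slot t, g t the chosen local coding vector, rcv t the set of receivers
that received the transmission of slot t.\<close>
definition arrivals_before :: "(nat \<Rightarrow> nat) \<Rightarrow> nat \<Rightarrow> nat" where
  "arrivals_before a t = (\<Sum>s<t. a s)"

definition after_step3 :: "(nat \<Rightarrow> nat) \<Rightarrow> (nat \<Rightarrow> 'a::field alg_state) \<Rightarrow> nat \<Rightarrow> 'a alg_state" where
  "after_step3 a st t = step3 (arrivals_before a t) (a t) (st t)"

definition is_run :: "nat \<Rightarrow> (nat \<Rightarrow> nat) \<Rightarrow> (nat \<Rightarrow> nat set) \<Rightarrow> (nat \<Rightarrow> nat \<Rightarrow> 'a::field)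
                      \<Rightarrow> (nat \<Rightarrow> 'a alg_state) \<Rightarrow> bool" where
  "is_run n a rcv g st \<longleftrightarrow>
     st 0 = init_state \<and>
     (\<forall>t. valid_g n (after_step3 a st t) (g t) \<and>
          valid_steps678 n (step5 (rcv t) (g t) (after_step3 a st t)) (st (Suc t)))"

definition total_arrivals :: "(nat \<Rightarrow> nat) \<Rightarrow> nat \<Rightarrow> nat" where
  "total_arrivals a t = (\<Sum>s\<le>t. a s)"

definition sender_knowledge :: "(nat \<Rightarrow> nat) \<Rightarrow> nat \<Rightarrow> (nat \<Rightarrow> 'a::field) set" where
  "sender_knowledge a t = {v. \<forall>i\<ge>total_arrivals a t. v i = 0}"

definition transmitted :: "(nat \<Rightarrow> nat) \<Rightarrow> (nat \<Rightarrow> nat \<Rightarrow> 'a::field) \<Rightarrow> (nat \<Rightarrow> 'a alg_state)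
                          \<Rightarrow> nat \<Rightarrow> (nat \<Rightarrow> 'a)" where
  "transmitted a g st s = lincomb (queue (after_step3 a st s)) (g s)"

definition receiver_knowledge :: "(nat \<Rightarrow> nat) \<Rightarrow> (nat \<Rightarrow> nat set) \<Rightarrow> (nat \<Rightarrow> nat \<Rightarrow> 'a::field)
                                 \<Rightarrow> (nat \<Rightarrow> 'a alg_state) \<Rightarrow> nat \<Rightarrow> nat \<Rightarrow> (nat \<Rightarrow> 'a) set" where
  "receiver_knowledge a rcv g st j t =
     fspan {transmitted a g st s | s. s < t \<and> j \<in> rcv s \<and> queue (after_step3 a st s) \<noteq> []}"

end

theory Submission
  imports Defs
begin
interpretation fs: vector_space "fscale :: 'a::field \<Rightarrow> (nat \<Rightarrow> 'a) \<Rightarrow> _"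
  by unfold_locales (auto simp: fscale_def fun_eq_iff algebra_simps)

lemma lincomb_hom: "module_hom fscale fscale (lincomb (y::(nat\<Rightarrow>'a::field) list))"
  unfolding module_hom_iff
  apply (intro conjI)
  apply (rule fs.module_axioms)+
  by (auto simp: lincomb_def fscale_def fun_eq_iff algebra_simps sum.distrib sum_distrib_left)

lemma sum_fun_apply: "(\<Sum>x\<in>A. f x) (m::nat) = (\<Sum>x\<in>A. (f x m :: 'a::comm_monoid_add))"
  by (induction A rule: infinite_finite_induct) auto

definition Ek :: "nat \<Rightarrow> (nat \<Rightarrow> 'a::field) set" where
  "Ek k = {v. \<forall>i\<ge>k. v i = 0}"

lemma unitv_inj: "unitv i = (unitv j :: nat \<Rightarrow> 'a::field) \<longleftrightarrow> i = j"
  by (auto simp: unitv_def fun_eq_iff)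

lemma sum_if_mult: "finite A \<Longrightarrow> (\<Sum>i\<in>A. f i * (if m = i then 1 else 0)) = (if m \<in> A then f m else (0::'a::semiring_1))"
proof -
  assume A: "finite A"
  have "(\<Sum>i\<in>A. f i * (if m = i then 1 else 0)) = (\<Sum>i\<in>A. if m = i then f i else 0)" by (rule sum.cong) auto
  then show ?thesis using A by (simp add: sum.delta)
qed

lemma set_idrows: "set (idrows k) = (unitv ` {..<k} :: (nat \<Rightarrow> 'a::field) set)"
  by (auto simp: idrows_def)

lemma Ek_subspace: "fs.subspace (Ek k)"
  by (auto simp: fs.subspace_def Ek_def fscale_def)

lemma unitv_Ek: "i < k \<Longrightarrow> unitv i \<in> Ek k"
  by (auto simp: unitv_def Ek_def)

lemma Ek_expand: "v \<in> Ek k \<Longrightarrow> v = (\<Sum>i<k. fscale (v i) (unitv i))"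
  by (auto simp: fun_eq_iff sum_fun_apply fscale_def unitv_def Ek_def sum_if_mult not_less)

lemma span_idrows: "fspan (set (idrows k)) = (Ek k :: (nat \<Rightarrow> 'a::field) set)"
proof
  show "fspan (set (idrows k)) \<subseteq> (Ek k :: (nat \<Rightarrow> 'a::field) set)"
    by (rule fs.span_minimal) (auto simp: set_idrows unitv_Ek Ek_subspace)
  show "Ek k \<subseteq> fspan (set (idrows k) :: (nat \<Rightarrow> 'a::field) set)"
  proof
    fix v :: "nat \<Rightarrow> 'a" assume "v \<in> Ek k"
    then have "v = (\<Sum>i<k. fscale (v i) (unitv i))" by (rule Ek_expand)
    also have "\<dots> \<in> fspan (set (idrows k))"
      by (intro fs.span_sum fs.span_scale fs.span_base) (auto simp: set_idrows)
    finally show "v \<in> fspan (set (idrows k))" .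
  qed
qed

lemma indep_idrows: "findep (set (idrows k) :: (nat \<Rightarrow> 'a::field) set)"
proof
  assume "fs.dependent (set (idrows k) :: (nat \<Rightarrow> 'a::field) set)"
  then have "\<exists>u. (\<exists>v\<in>set (idrows k). u v \<noteq> 0) \<and> (\<Sum>v\<in>set (idrows k). fscale (u v) v) = (0::nat\<Rightarrow>'a)"
    using fs.dependent_finite[of "set (idrows k) :: (nat \<Rightarrow> 'a) set"] by simp
  then obtain u where u: "\<exists>v\<in>set (idrows k). u v \<noteq> 0" "(\<Sum>v\<in>set (idrows k). fscale (u v) v) = (0::nat\<Rightarrow>'a)"
    by blast
  have inj: "inj_on (unitv :: nat \<Rightarrow> nat \<Rightarrow> 'a) {..<k}" by (auto simp: inj_on_def unitv_inj)
  from u(2) have "(\<Sum>i<k. fscale (u (unitv i)) (unitv i)) = (0::nat\<Rightarrow>'a)"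
    by (simp add: set_idrows sum.reindex[OF inj])
  then have "\<And>m. m < k \<Longrightarrow> u (unitv m) = 0"
    by (drule_tac x=m in fun_cong) (simp add: sum_fun_apply fscale_def unitv_def sum_if_mult)
  with u(1) show False by (auto simp: set_idrows)
qed

lemma card_idrows: "card (set (idrows k) :: (nat \<Rightarrow> 'a::field) set) = k"
  by (simp add: set_idrows card_image inj_on_def unitv_inj)

lemma dim_Ek: "fdim (Ek k :: (nat \<Rightarrow> 'a::field) set) = k"
  by (metis span_idrows fs.dim_span_eq_card_independent indep_idrows card_idrows)

lemma lincomb_cong: "(\<And>i. i < length y \<Longrightarrow> h i = h' i) \<Longrightarrow> lincomb y h = lincomb y h'"
  by (auto simp: lincomb_def fun_eq_iff)

lemma lincomb_sum: "lincomb y h = (\<Sum>i<length y. fscale (h i) (y ! i))"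
  by (auto simp: lincomb_def fun_eq_iff sum_fun_apply fscale_def)

lemma lincomb_in_span: "lincomb y h \<in> fspan (set y)"
  unfolding lincomb_sum by (intro fs.span_sum fs.span_scale fs.span_base) auto

lemma lincomb_unitv: "i < length y \<Longrightarrow> lincomb y (unitv i) = y ! i"
proof -
  assume i: "i < length y"
  have "(\<Sum>ia<length y. (if ia = i then 1 else 0) * (y ! ia) x) = (y ! i) x" for x
  proof -
    have "(\<Sum>ia<length y. (if ia = i then 1 else 0) * (y ! ia) x) = (\<Sum>ia<length y. (if ia = i then (y ! ia) x else 0))"
      by (intro sum.cong) auto
    also have "\<dots> = (y ! i) x" using i by (simp add: sum.delta)
    finally show ?thesis .
  qed
  then show ?thesis by (simp add: lincomb_def fun_eq_iff unitv_def)
qed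

lemma span_list_image: "fspan (set y) = lincomb y ` Ek (length y)"
proof -
  have "lincomb y ` set (idrows (length y)) = set y"
    by (auto simp: set_idrows lincomb_unitv in_set_conv_nth image_iff)
  then show ?thesis
    using module_hom.span_image[OF lincomb_hom, of y "set (idrows (length y))"]
    by (simp add: span_idrows)
qed

lemma lincomb_zero_imp: 
  fixes y :: "(nat \<Rightarrow> 'a::field) list"
  assumes "distinct y" "findep (set y)" "h \<in> Ek (length y)" "lincomb y h = 0"
  shows "h = 0"
proof -
  have inj: "inj_on (\<lambda>i. y ! i) {..<length y}" using assms(1) by (simp add: inj_on_def nth_eq_iff_index_eq)
  have im: "(\<lambda>i. y ! i) ` {..<length y} = set y" by (auto simp: in_set_conv_nth)
  define u where "u v = h (the_inv_into {..<length y} (\<lambda>i. y ! i) v)" for v :: "nat \<Rightarrow> 'a"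
  have "(\<Sum>v\<in>set y. fscale (u v) v) = (\<Sum>i<length y. fscale (u (y!i)) (y!i))"
    by (subst im[symmetric], subst sum.reindex[OF inj]) simp
  also have "\<dots> = lincomb y h"
    unfolding lincomb_sum using assms(1) by (intro sum.cong) (auto simp: u_def the_inv_into_f_f[OF inj])
  finally have "(\<Sum>v\<in>set y. fscale (u v) v) = 0" using assms(4) by simp
  then have "\<forall>v\<in>set y. u v = 0" using assms(2) fs.dependent_finite by auto
  then have "\<And>i. i < length y \<Longrightarrow> h i = 0"
    by (metis lessThan_iff nth_mem u_def the_inv_into_f_f[OF inj])
  show ?thesis
  proof (rule ext)
    fix x show "h x = 0 x" using assms(3) \<open>\<And>i. i < length y \<Longrightarrow> h i = 0\<close> by (cases "x < length y") (auto simp: Ek_def)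
  qed
qed

lemma lincomb_inj:
  assumes "distinct y" "findep (set y)"
  shows "inj_on (lincomb y) (Ek (length y))"
proof (rule inj_onI)
  fix h h' assume h: "h \<in> Ek (length y)" "h' \<in> Ek (length y)" "lincomb y h = lincomb y h'"
  have "lincomb y (h - h') = lincomb y h - lincomb y h'" by (rule module_hom.diff[OF lincomb_hom])
  also have "\<dots> = 0" using h(3) by simp
  finally have "lincomb y (h - h') = 0" .
  moreover have "h - h' \<in> Ek (length y)" using h(1,2) unfolding Ek_def by auto
  ultimately show "h = h'" using lincomb_zero_imp[OF assms, of "h - h'"] by simp
qed

lemma lincomb_map: "lincomb (map (lincomb y) B) h = lincomb y (lincomb B h)"
proof -
  have "(\<Sum>i<length B. h i * (\<Sum>k<length y. (B!i) k * (y!k) m)) = (\<Sum>k<length y. (\<Sum>i<length B. h i * (B!i) k) * (y!k) m)" for m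
    by (simp add: sum_distrib_left sum_distrib_right mult.assoc sum.swap[of _ "{..<length B}"])
  then show ?thesis by (simp add: lincomb_def fun_eq_iff)
qed

context vector_space begin

lemma indep_explicit_fin: "finite B \<Longrightarrow> independent B \<longleftrightarrow> (\<forall>c. (\<Sum>v\<in>B. c v *s v) = 0 \<longrightarrow> (\<forall>v\<in>B. c v = 0))"
  using dependent_finite by auto

lemma dim_sums_Int_gen:
  assumes "subspace S" "subspace T" "S \<subseteq> span F" "T \<subseteq> span G" "finite F" "finite G"
  shows "dim {x + y |x y. x \<in> S \<and> y \<in> T} + dim(S \<inter> T) = dim S + dim T" (is "dim ?ST + _ = _")
proof -
  obtain B where B: "B \<subseteq> S \<inter> T" "S \<inter> T \<subseteq> span B"
             and indB: "independent B"
             and cardB: "card B = dim (S \<inter> T)"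
    using basis_exists by metis
  then obtain C D where "B \<subseteq> C" "C \<subseteq> S" "independent C" "S \<subseteq> span C"
                    and "B \<subseteq> D" "D \<subseteq> T" "independent D" "T \<subseteq> span D"
    using maximal_independent_subset_extend
    by (metis Int_subset_iff \<open>B \<subseteq> S \<inter> T\<close> indB)
  then have "finite C" "finite D"
    using independent_span_bound[OF \<open>finite F\<close>, of C] independent_span_bound[OF \<open>finite G\<close>, of D] assms(3,4)
    by auto
  then have "finite B" using \<open>B \<subseteq> C\<close> finite_subset by auto
  have Beq: "B = C \<inter> D"
  proof (rule spanning_subset_independent [symmetric])
    show "independent (C \<inter> D)"
      by (meson \<open>independent C\<close> independent_mono inf.cobounded1)
  qed (use B \<open>C \<subseteq> S\<close> \<open>D \<subseteq> T\<close> \<open>B \<subseteq> C\<close> \<open>B \<subseteq> D\<close> in auto)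
  then have Deq: "D = B \<union> (D - C)"
    by blast
  have CUD: "C \<union> D \<subseteq> ?ST"
  proof (simp, intro conjI)
    show "C \<subseteq> ?ST"
      using span_zero span_minimal [OF _ \<open>subspace T\<close>] \<open>C \<subseteq> S\<close> by force
    show "D \<subseteq> ?ST"
      using span_zero span_minimal [OF _ \<open>subspace S\<close>] \<open>D \<subseteq> T\<close> by force
  qed
  have "a v = 0" if 0: "(\<Sum>v\<in>C. a v *s v) + (\<Sum>v\<in>D - C. a v *s v) = 0"
                 and v: "v \<in> C \<union> (D-C)" for a v
  proof -
    have CsS: "\<And>x. x \<in> C \<Longrightarrow> a x *s x \<in> S"
      using \<open>C \<subseteq> S\<close> \<open>subspace S\<close> subspace_scale by auto
    have eq: "(\<Sum>v\<in>D - C. a v *s v) = - (\<Sum>v\<in>C. a v *s v)"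
      using that add_eq_0_iff by blast
    have "(\<Sum>v\<in>D - C. a v *s v) \<in> S"
      by (simp add: eq CsS \<open>subspace S\<close> subspace_neg subspace_sum)
    moreover have "(\<Sum>v\<in>D - C. a v *s v) \<in> T"
      apply (rule subspace_sum [OF \<open>subspace T\<close>])
      by (meson DiffD1 \<open>D \<subseteq> T\<close> \<open>subspace T\<close> subset_eq subspace_def)
    ultimately have "(\<Sum>v \<in> D-C. a v *s v) \<in> span B"
      using B by blast
    then obtain e where e: "(\<Sum>v\<in>B. e v *s v) = (\<Sum>v \<in> D-C. a v *s v)"
      using span_finite [OF \<open>finite B\<close>] by force
    define cc where "cc x = (if x \<in> B then a x + e x else a x)" for x
    have [simp]: "C \<inter> B = B" "D \<inter> B = B" "C \<inter> - B = C-D" "B \<inter> (D - C) = {}"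
      using \<open>B \<subseteq> C\<close> \<open>B \<subseteq> D\<close> Beq by blast+
    have f2: "(\<Sum>v\<in>C \<inter> D. e v *s v) = (\<Sum>v\<in>D - C. a v *s v)"
      using Beq e by presburger
    have f3: "(\<Sum>v\<in>C \<union> D. a v *s v) = (\<Sum>v\<in>C - D. a v *s v) + (\<Sum>v\<in>D - C. a v *s v) + (\<Sum>v\<in>C \<inter> D. a v *s v)"
      using \<open>finite C\<close> \<open>finite D\<close> sum.union_diff2 by blast
    have f4: "(\<Sum>v\<in>C \<union> (D - C). a v *s v) = (\<Sum>v\<in>C. a v *s v) + (\<Sum>v\<in>D - C. a v *s v)"
      by (meson Diff_disjoint \<open>finite C\<close> \<open>finite D\<close> finite_Diff sum.union_disjoint)
    have "(\<Sum>v\<in>C. cc v *s v) = 0"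
      using 0 f2 f3 f4
      apply (simp add: cc_def Beq \<open>finite C\<close> sum.If_cases algebra_simps sum.distrib
          if_distrib if_distribR)
      apply (simp add: add.commute add.left_commute diff_eq)
      done
    then have "\<And>v. v \<in> C \<Longrightarrow> cc v = 0"
      using indep_explicit_fin[OF \<open>finite C\<close>] \<open>independent C\<close> by blast
    then have C0: "\<And>v. v \<in> C - B \<Longrightarrow> a v = 0"
      by (simp add: cc_def Beq) meson
    then have [simp]: "(\<Sum>x\<in>C - B. a x *s x) = 0"
      by simp
    have "(\<Sum>x\<in>C. a x *s x) = (\<Sum>x\<in>B. a x *s x)"
    proof -
      have "C - D = C - B"
        using Beq by blast
      then show ?thesis
        using Beq \<open>(\<Sum>x\<in>C - B. a x *s x) = 0\<close> f3 f4 by auto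
    qed
    with 0 have Dcc0: "(\<Sum>v\<in>D. a v *s v) = 0"
      by (subst Deq) (simp add: \<open>finite B\<close> \<open>finite D\<close> sum_Un)
    then have D0: "\<And>v. v \<in> D \<Longrightarrow> a v = 0"
      using indep_explicit_fin[OF \<open>finite D\<close>] \<open>independent D\<close> by blast
    show ?thesis
      using v C0 D0 Beq by blast
  qed
  moreover have fin: "finite (C \<union> (D - C))" using \<open>finite C\<close> \<open>finite D\<close> by auto
  ultimately have "independent (C \<union> (D - C))"
    unfolding indep_explicit_fin[OF fin]
    by (simp add: \<open>finite C\<close> \<open>finite D\<close> sum_Un del: Un_Diff_cancel)
  then have indCUD: "independent (C \<union> D)" by simp
  have "dim (S \<inter> T) = card B"
    by (rule dim_unique [OF B indB refl])
  moreover have "dim S = card C"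
    by (metis \<open>C \<subseteq> S\<close> \<open>independent C\<close> \<open>S \<subseteq> span C\<close> basis_card_eq_dim)
  moreover have "dim T = card D"
    by (metis \<open>D \<subseteq> T\<close> \<open>independent D\<close> \<open>T \<subseteq> span D\<close> basis_card_eq_dim)
  moreover have "dim ?ST = card(C \<union> D)"
  proof -
    have *: "\<And>x y. \<lbrakk>x \<in> S; y \<in> T\<rbrakk> \<Longrightarrow> x + y \<in> span (C \<union> D)"
      by (meson \<open>S \<subseteq> span C\<close> \<open>T \<subseteq> span D\<close> span_add span_mono subsetCE sup.cobounded1 sup.cobounded2)
    show ?thesis
      by (auto intro: * dim_unique [OF CUD _ indCUD refl])
  qed
  ultimately show ?thesis
    using \<open>B = C \<inter> D\<close> [symmetric]
    by (simp add: \<open>finite C\<close> \<open>finite D\<close> card_Un_Int)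
qed

end

lemma dim_le_Ek:
  fixes V :: "(nat \<Rightarrow> 'a::field) set"
  assumes "V \<subseteq> Ek Q" shows "fdim V \<le> Q"
proof -
  have "V \<subseteq> fspan (set (idrows Q) :: (nat \<Rightarrow> 'a) set)" using assms by (simp add: span_idrows)
  then have "fdim V \<le> card (set (idrows Q) :: (nat \<Rightarrow> 'a) set)" by (rule fs.dim_le_card) simp
  then show ?thesis by (simp add: card_idrows)
qed

lemma inter_dim_bound:
  fixes W :: "nat \<Rightarrow> (nat \<Rightarrow> 'a::field) set"
  assumes "finite J" "J \<noteq> {}" "\<forall>j\<in>J. fs.subspace (W j) \<and> W j \<subseteq> Ek Q"
  shows "int Q - (\<Sum>j\<in>J. int Q - int (fdim (W j))) \<le> int (fdim (\<Inter>j\<in>J. W j))"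
  using assms
proof (induction J rule: finite_ne_induct)
  case (singleton x)
  then show ?case by simp
next
  case (insert x F)
  define I where "I = (\<Inter>j\<in>F. W j)"
  obtain j0 where j0: "j0 \<in> F" using insert.hyps by auto
  have I1: "fs.subspace I" using insert.prems
    unfolding I_def by (auto simp: fs.subspace_def)
  have I2: "I \<subseteq> Ek Q" using insert.prems j0 unfolding I_def by blast
  note I = I1 I2
  have Wx: "fs.subspace (W x)" "W x \<subseteq> Ek Q" using insert.prems by auto
  have fin: "finite (set (idrows Q) :: (nat \<Rightarrow> 'a) set)" by simp
  have eq: "fdim {a + b |a b. a \<in> W x \<and> b \<in> I} + fdim (W x \<inter> I) = fdim (W x) + fdim I"
    by (rule fs.dim_sums_Int_gen[OF Wx(1) I(1) _ _ fin fin]) (use Wx I span_idrows in auto)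
  have "{a + b |a b. a \<in> W x \<and> b \<in> I} \<subseteq> Ek Q"
    using Wx I Ek_subspace[of Q] by (auto intro: fs.subspace_add)
  then have le: "fdim {a + b |a b. a \<in> W x \<and> b \<in> I} \<le> Q" by (rule dim_le_Ek)
  have IH: "int Q - (\<Sum>j\<in>F. int Q - int (fdim (W j))) \<le> int (fdim I)"
    using insert.IH insert.prems unfolding I_def by auto
  have "(\<Inter>j\<in>insert x F. W j) = W x \<inter> I" by (simp add: I_def)
  then show ?case using insert.hyps eq le IH by simp
qed


definition inv0 :: "nat \<Rightarrow> nat \<Rightarrow> 'a::field alg_state \<Rightarrow> (nat \<Rightarrow> (nat \<Rightarrow> 'a) set) \<Rightarrow> bool" where
 "inv0 n A s V \<longleftrightarrow> distinct (queue s) \<and> findep (set (queue s)) \<and> set (queue s) \<subseteq> Ek A \<and>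
   Bm s = idrows (length (queue s)) \<and>
   (\<forall>j\<in>{1..n}. set (Bj s j) \<subseteq> Ek (length (queue s)) \<and> fs.subspace (V j) \<and> V j \<subseteq> Ek A \<and>
       Ek A \<subseteq> {x + y | x y. x \<in> V j \<and> y \<in> fspan (set (queue s))} \<and>
       V j \<inter> fspan (set (queue s)) = lincomb (queue s) ` fspan (set (Bj s j)))"

definition inv :: "nat \<Rightarrow> nat \<Rightarrow> 'a::field alg_state \<Rightarrow> (nat \<Rightarrow> (nat \<Rightarrow> 'a) set) \<Rightarrow> bool" where
 "inv n A s V \<longleftrightarrow> inv0 n A s V \<and> (\<Inter>j\<in>{1..n}. fspan (set (Bj s j))) = {0}"

lemma span_subset_Ek: "S \<subseteq> Ek k \<Longrightarrow> fspan S \<subseteq> Ek k"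
  by (rule fs.span_minimal) (auto simp: Ek_subspace)

lemma dim_image_le:
  fixes S :: "(nat \<Rightarrow> 'a::field) set"
  assumes "finite S"
  shows "fdim (lincomb y ` fspan S) \<le> fdim (fspan S)"
proof -
  obtain R where R: "R \<subseteq> fspan S" "findep R" "fspan S \<subseteq> fspan R" "card R = fdim (fspan S)"
    using fs.basis_exists by blast
  have finR: "finite R" using fs.independent_span_bound[OF assms R(2) R(1)] by simp
  have "fspan R = fspan S" using R fs.span_mono fs.span_span
    by (metis fs.span_minimal fs.subspace_span subset_antisym)
  then have "lincomb y ` fspan S = fspan (lincomb y ` R)"
    using module_hom.span_image[OF lincomb_hom, of y R] by simp
  then have "fdim (lincomb y ` fspan S) \<le> card (lincomb y ` R)"
    using fs.dim_le_card[of "lincomb y ` fspan S" "lincomb y ` R"] finR by simp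
  also have "\<dots> \<le> card R" using finR by (rule card_image_le)
  finally show ?thesis using R(4) by simp
qed

lemma inv_bound:
  fixes s :: "'a::field alg_state"
  assumes "inv n A s V" "n \<ge> 1"
  shows "int (length (queue s)) \<le> (\<Sum>j=1..n. int A - int (fdim (V j)))"
proof -
  define y where "y = queue s"
  define Q where "Q = length y"
  define U where "U = fspan (set y)"
  have y: "distinct y" "findep (set y)" "set y \<subseteq> Ek A"
    using assms(1) unfolding inv_def inv0_def y_def by auto
  have dimU: "fdim U = Q" unfolding U_def Q_def
    using fs.dim_span_eq_card_independent[OF y(2)] distinct_card[OF y(1)] by simp
  have UA: "U \<subseteq> Ek A" unfolding U_def by (rule span_subset_Ek[OF y(3)])
  have finA: "finite (set (idrows A) :: (nat \<Rightarrow> 'a) set)" by simp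
  have each: "int (fdim (V j)) + int Q \<le> int A + int (fdim (fspan (set (Bj s j))))"
    if j: "j \<in> {1..n}" for j
  proof -
    have J: "set (Bj s j) \<subseteq> Ek Q" "fs.subspace (V j)" "V j \<subseteq> Ek A"
      "Ek A \<subseteq> {x + y | x y. x \<in> V j \<and> y \<in> U}"
      "V j \<inter> U = lincomb y ` fspan (set (Bj s j))"
      using assms(1) j unfolding inv_def inv0_def y_def Q_def U_def by auto
    have eq: "fdim {x + y |x y. x \<in> V j \<and> y \<in> U} + fdim (V j \<inter> U) = fdim (V j) + fdim U"
      by (rule fs.dim_sums_Int_gen[OF J(2) _ _ _ finA, of U "set y"])
         (use J(3) span_idrows[of A] in \<open>auto simp: U_def\<close>)
    have "{x + y |x y. x \<in> V j \<and> y \<in> U} \<subseteq> Ek A"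
      using J(3) UA Ek_subspace[of A] by (auto intro: fs.subspace_add)
    with J(4) have "{x + y |x y. x \<in> V j \<and> y \<in> U} = Ek A" by blast
    then have "fdim {x + y |x y. x \<in> V j \<and> y \<in> U} = A" by (simp add: dim_Ek)
    moreover have "fdim (V j \<inter> U) \<le> fdim (fspan (set (Bj s j)))"
      unfolding J(5) by (rule dim_image_le) simp
    ultimately show ?thesis using eq dimU by linarith
  qed
  have "int Q - (\<Sum>j\<in>{1..n}. int Q - int (fdim (fspan (set (Bj s j)))))
          \<le> int (fdim (\<Inter>j\<in>{1..n}. fspan (set (Bj s j))))"
  proof (rule inter_dim_bound)
    show "{1..n} \<noteq> {}" using assms(2) by auto
    show "\<forall>j\<in>{1..n}. fs.subspace (fspan (set (Bj s j))) \<and> fspan (set (Bj s j)) \<subseteq> Ek Q"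
    proof
      fix j assume "j \<in> {1..n}"
      then have "set (Bj s j) \<subseteq> Ek Q" using assms(1) unfolding inv_def inv0_def Q_def y_def by auto
      then show "fs.subspace (fspan (set (Bj s j))) \<and> fspan (set (Bj s j)) \<subseteq> Ek Q"
        using span_subset_Ek by auto
    qed
  qed simp
  also have "(\<Inter>j\<in>{1..n}. fspan (set (Bj s j))) = {0}"
    using assms(1) by (simp add: inv_def)
  also have "fdim ({0} :: (nat \<Rightarrow> 'a) set) = 0"
    using fs.dim_span_eq_card_independent[OF fs.independent_empty] by simp
  finally have "int Q \<le> (\<Sum>j\<in>{1..n}. int Q - int (fdim (fspan (set (Bj s j)))))" by simp
  also have "\<dots> \<le> (\<Sum>j=1..n. int A - int (fdim (V j)))"
    by (rule sum_mono) (use each in force)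
  finally show ?thesis by (simp add: Q_def y_def)
qed

lemma inv_init:
  assumes "n \<ge> 1"
  shows "inv n 0 (init_state :: 'a::field alg_state) (\<lambda>j. fspan {})"
proof -
  have E0: "Ek 0 = ({0} :: (nat \<Rightarrow> 'a) set)" by (auto simp: Ek_def fun_eq_iff)
  have "{1..n} \<noteq> {}" using assms by auto
  then show ?thesis
    unfolding inv_def inv0_def init_state_def
    by (auto simp: E0 idrows_def lincomb_def fs.independent_empty)
qed


lemma indep_append_units:
  fixes Y :: "(nat \<Rightarrow> 'a::field) set"
  assumes "findep Y" "Y \<subseteq> Ek A"
  shows "findep (Y \<union> unitv ` {A..<A+k})"
proof (induction k)
  case 0 then show ?case using assms(1) by simp
next
  case (Suc k)
  have "{A..<A + Suc k} = insert (A+k) {A..<A+k}" by auto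
  then have eq: "Y \<union> unitv ` {A..<A + Suc k} = insert (unitv (A+k)) (Y \<union> unitv ` {A..<A+k})"
    by auto
  have "Y \<union> unitv ` {A..<A+k} \<subseteq> Ek (A+k)"
    using assms(2) by (auto simp: Ek_def unitv_def)
  then have "fspan (Y \<union> unitv ` {A..<A+k}) \<subseteq> Ek (A+k)" by (rule span_subset_Ek)
  moreover have "unitv (A+k) \<notin> (Ek (A+k) :: (nat \<Rightarrow> 'a) set)" by (auto simp: Ek_def unitv_def)
  ultimately have "unitv (A+k) \<notin> fspan (Y \<union> unitv ` {A..<A+k})" by blast
  then show ?case unfolding eq by (rule fs.independent_insertI[OF _ Suc.IH])
qed

lemma lincomb_append_Ek:
  assumes "h \<in> Ek (length y)"
  shows "lincomb (y @ z) h = lincomb y h"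
proof -
  have "(\<Sum>i<length (y @ z). h i * ((y @ z) ! i) m) = (\<Sum>i<length y. h i * ((y @ z) ! i) m)" for m
    by (rule sum.mono_neutral_right) (use assms in \<open>auto simp: Ek_def\<close>)
  then show ?thesis by (simp add: lincomb_def fun_eq_iff nth_append)
qed

lemma units_span_zero_below:
  "fspan (unitv ` {A..<B}) \<subseteq> {v :: nat \<Rightarrow> 'a::field. \<forall>i<A. v i = 0}"
  by (rule fs.span_minimal) (auto simp: unitv_def fs.subspace_def fscale_def)

lemma split_Ek:
  fixes v :: "nat \<Rightarrow> 'a::field"
  assumes "v \<in> Ek (A + k)"
  shows "\<exists>v1 v2. v = v1 + v2 \<and> v1 \<in> Ek A \<and> v2 \<in> fspan (unitv ` {A..<A+k})"
proof -
  define v1 where "v1 = (\<lambda>i. if i < A then v i else 0)"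
  define v2 where "v2 = (\<lambda>i. if i < A then 0 else v i)"
  have "v2 = (\<Sum>i\<in>{A..<A+k}. fscale (v i) (unitv i))"
    using assms by (auto simp: fun_eq_iff sum_fun_apply fscale_def unitv_def Ek_def sum_if_mult v2_def not_less)
  also have "\<dots> \<in> fspan (unitv ` {A..<A+k})"
    by (intro fs.span_sum fs.span_scale fs.span_base) auto
  finally have "v2 \<in> fspan (unitv ` {A..<A+k})" .
  moreover have "v = v1 + v2" by (auto simp: v1_def v2_def fun_eq_iff)
  moreover have "v1 \<in> Ek A" by (auto simp: v1_def Ek_def)
  ultimately show ?thesis by blast
qed

lemma inv_step3:
  fixes s :: "'a::field alg_state"
  assumes "inv n A s V"
  shows "inv n (A + k) (step3 A k s) V"
proof (cases "k = 0")
  case True then show ?thesis using assms by (simp add: step3_def)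
next
  case False
  define y where "y = queue s"
  define N where "N = (unitv ` {A..<A+k} :: (nat \<Rightarrow> 'a) set)"
  define y' where "y' = y @ map unitv [A..<A+k]"
  have st: "step3 A k s = s\<lparr>queue := y', Bm := idrows (length y')\<rparr>"
    using False by (simp add: step3_def y'_def y_def Let_def)
  have y: "distinct y" "findep (set y)" "set y \<subseteq> Ek A" and Bm: "Bm s = idrows (length y)"
    using assms unfolding inv_def inv0_def y_def by auto
  have sety': "set y' = set y \<union> N" by (auto simp: y'_def N_def)
  have NA: "N \<inter> Ek A = {}" by (auto simp: N_def Ek_def unitv_def)
  have d: "distinct y'" using y(1,3) NA unfolding y'_def N_def
    by (auto simp: distinct_map inj_on_def unitv_inj)
  have i: "findep (set y')" unfolding sety' N_def by (rule indep_append_units[OF y(2,3)])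
  have EAk: "Ek A \<subseteq> (Ek (A+k) :: (nat \<Rightarrow> 'a) set)" by (auto simp: Ek_def)
  have s': "set y' \<subseteq> Ek (A+k)" using y(3) EAk by (auto simp: sety' N_def Ek_def unitv_def)
  have lenle: "length y \<le> length y'" by (simp add: y'_def)
  have Uy: "fspan (set y) \<subseteq> Ek A" by (rule span_subset_Ek[OF y(3)])
  have spanU': "fspan (set y') = {a + b | a b. a \<in> fspan (set y) \<and> b \<in> fspan N}"
    unfolding sety' by (rule fs.span_Un)
  have J: "set (Bj s j) \<subseteq> Ek (length y') \<and> fs.subspace (V j) \<and> V j \<subseteq> Ek (A+k) \<and>
       Ek (A+k) \<subseteq> {a + b | a b. a \<in> V j \<and> b \<in> fspan (set y')} \<and>
       V j \<inter> fspan (set y') = lincomb y' ` fspan (set (Bj s j))" if j: "j \<in> {1..n}" for j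
  proof -
    have J: "set (Bj s j) \<subseteq> Ek (length y)" "fs.subspace (V j)" "V j \<subseteq> Ek A"
      "Ek A \<subseteq> {a + b | a b. a \<in> V j \<and> b \<in> fspan (set y)}"
      "V j \<inter> fspan (set y) = lincomb y ` fspan (set (Bj s j))"
      using assms j unfolding inv_def inv0_def y_def by auto
    have 1: "set (Bj s j) \<subseteq> Ek (length y')" using J(1) lenle by (auto simp: Ek_def)
    have 3: "V j \<subseteq> Ek (A+k)" using J(3) EAk by blast
    have 4: "Ek (A+k) \<subseteq> {a + b | a b. a \<in> V j \<and> b \<in> fspan (set y')}"
    proof
      fix v :: "nat \<Rightarrow> 'a" assume "v \<in> Ek (A+k)"
      then obtain v1 v2 where v: "v = v1 + v2" "v1 \<in> Ek A" "v2 \<in> fspan N"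
        using split_Ek unfolding N_def by blast
      obtain x w where xw: "v1 = x + w" "x \<in> V j" "w \<in> fspan (set y)" using J(4) v(2) by blast
      have "w + v2 \<in> fspan (set y')" using spanU' xw(3) v(3) by blast
      moreover have "v = x + (w + v2)" using v xw by (simp add: add.assoc)
      ultimately show "v \<in> {a + b | a b. a \<in> V j \<and> b \<in> fspan (set y')}" using xw(2) by blast
    qed
    have "V j \<inter> fspan (set y') \<subseteq> V j \<inter> fspan (set y)"
    proof
      fix z assume z: "z \<in> V j \<inter> fspan (set y')"
      then obtain w m where wm: "z = w + m" "w \<in> fspan (set y)" "m \<in> fspan N" using spanU' by blast
      have "m = z - w" using wm by simp
      moreover have "z \<in> Ek A" "w \<in> Ek A" using z J(3) wm(2) Uy by auto
      ultimately have "m \<in> Ek A" by (simp add: Ek_def)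
      moreover have "\<forall>i<A. m i = 0" using units_span_zero_below[of A "A+k"] wm(3) unfolding N_def by blast
      ultimately have "m = 0" by (auto simp: Ek_def fun_eq_iff not_less[symmetric])
      then show "z \<in> V j \<inter> fspan (set y)" using z wm by simp
    qed
    moreover have "V j \<inter> fspan (set y) \<subseteq> V j \<inter> fspan (set y')"
      using fs.span_mono[of "set y" "set y'"] sety' by auto
    ultimately have "V j \<inter> fspan (set y') = V j \<inter> fspan (set y)" by blast
    also have "\<dots> = lincomb y ` fspan (set (Bj s j))" by (rule J(5))
    also have "\<dots> = lincomb y' ` fspan (set (Bj s j))"
    proof (rule image_cong[OF refl])
      fix h assume "h \<in> fspan (set (Bj s j))"
      then have "h \<in> Ek (length y)" using span_subset_Ek[OF J(1)] by blast
      then show "lincomb y h = lincomb y' h" unfolding y'_def by (rule lincomb_append_Ek[symmetric])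
    qed
    finally show ?thesis using 1 J(2) 3 4 by blast
  qed
  show ?thesis
    using assms d i s' J unfolding inv_def inv0_def st by simp
qed


lemma key5:
  fixes V :: "(nat \<Rightarrow> 'a::field) set"
  assumes V: "fs.subspace V" and VU: "V \<inter> fspan (set y) = lincomb y ` fspan B"
    and B: "B \<subseteq> Ek (length y)" and G: "G \<subseteq> Ek (length y)"
  shows "fspan (V \<union> lincomb y ` G) \<inter> fspan (set y) = lincomb y ` fspan (B \<union> G)"
proof -
  let ?L = "lincomb y"
  let ?E = "Ek (length y) :: (nat \<Rightarrow> 'a) set"
  have hom: "module_hom fscale fscale ?L" by (rule lincomb_hom)
  have UE: "fspan (set y) = ?L ` ?E" by (rule span_list_image)
  have spV: "fspan V = V" using V by simp
  have spG: "fspan (?L ` G) = ?L ` fspan G" by (rule module_hom.span_image[OF hom])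
  have spBG: "fspan (B \<union> G) \<subseteq> ?E" using B G by (intro span_subset_Ek) auto
  have spG_E: "fspan G \<subseteq> ?E" using G by (rule span_subset_Ek)
  show ?thesis
  proof
    show "fspan (V \<union> ?L ` G) \<inter> fspan (set y) \<subseteq> ?L ` fspan (B \<union> G)"
    proof
      fix x assume x: "x \<in> fspan (V \<union> ?L ` G) \<inter> fspan (set y)"
      then obtain v w where vw: "x = v + w" "v \<in> V" "w \<in> fspan (?L ` G)"
        using fs.span_Un[of V "?L ` G"] spV by auto
      then obtain h where h: "w = ?L h" "h \<in> fspan G" using spG by auto
      have "w \<in> fspan (set y)" using h spG_E UE by auto
      then have "v \<in> fspan (set y)" using x vw fs.span_diff[of x "set y" w] by auto
      with vw(2) VU obtain b where b: "v = ?L b" "b \<in> fspan B" by auto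
      have "x = ?L (b + h)" using vw b h module_hom.add[OF hom] by simp
      moreover have "b + h \<in> fspan (B \<union> G)"
        using b(2) h(2) fs.span_Un[of B G] by auto
      ultimately show "x \<in> ?L ` fspan (B \<union> G)" by blast
    qed
    show "?L ` fspan (B \<union> G) \<subseteq> fspan (V \<union> ?L ` G) \<inter> fspan (set y)"
    proof
      fix x assume "x \<in> ?L ` fspan (B \<union> G)"
      then obtain z where z: "x = ?L z" "z \<in> fspan (B \<union> G)" by auto
      then obtain b h where bh: "z = b + h" "b \<in> fspan B" "h \<in> fspan G"
        using fs.span_Un[of B G] by auto
      have "?L b \<in> V" using VU bh(2) by auto
      moreover have "?L h \<in> fspan (?L ` G)" using spG bh(3) by auto
      ultimately have "?L b + ?L h \<in> fspan (V \<union> ?L ` G)"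
        using fs.span_Un[of V "?L ` G"] spV by auto
      moreover have "x = ?L b + ?L h" using z bh module_hom.add[OF hom] by simp
      moreover have "x \<in> fspan (set y)" using z spBG UE by auto
      ultimately show "x \<in> fspan (V \<union> ?L ` G) \<inter> fspan (set y)" by simp
    qed
  qed
qed

lemma inv_step5:
  fixes s :: "'a::field alg_state"
  assumes inv: "inv0 n A s V" and g: "g \<in> Ek (length (queue s))"
  shows "inv0 n A (step5 R g s)
           (\<lambda>j. fspan (V j \<union> (if j \<in> R \<and> queue s \<noteq> [] then {lincomb (queue s) g} else {})))"
proof -
  define y where "y = queue s"
  define V' where "V' = (\<lambda>j. fspan (V j \<union> (if j \<in> R \<and> y \<noteq> [] then {lincomb y g} else {})))"
  have q: "queue (step5 R g s) = y" "Bm (step5 R g s) = Bm s"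
      "Bj (step5 R g s) = (\<lambda>j. if g \<noteq> 0 \<and> j \<in> R then Bj s j @ [g] else Bj s j)"
    by (simp_all add: step5_def y_def)
  have y: "distinct y" "findep (set y)" "set y \<subseteq> Ek A" "Bm s = idrows (length y)"
    using inv unfolding inv0_def y_def by auto
  have Uy: "fspan (set y) \<subseteq> Ek A" by (rule span_subset_Ek[OF y(3)])
  have J: "set (Bj (step5 R g s) j) \<subseteq> Ek (length y) \<and> fs.subspace (V' j) \<and> V' j \<subseteq> Ek A \<and>
       Ek A \<subseteq> {a + b | a b. a \<in> V' j \<and> b \<in> fspan (set y)} \<and>
       V' j \<inter> fspan (set y) = lincomb y ` fspan (set (Bj (step5 R g s) j))" if j: "j \<in> {1..n}" for j
  proof -
    have J: "set (Bj s j) \<subseteq> Ek (length y)" "fs.subspace (V j)" "V j \<subseteq> Ek A"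
      "Ek A \<subseteq> {a + b | a b. a \<in> V j \<and> b \<in> fspan (set y)}"
      "V j \<inter> fspan (set y) = lincomb y ` fspan (set (Bj s j))"
      using inv j unfolding inv0_def y_def by auto
    have 1: "set (Bj (step5 R g s) j) \<subseteq> Ek (length y)" using J(1) g by (auto simp: q y_def)
    have 2: "fs.subspace (V' j)" unfolding V'_def by simp
    have Lg: "lincomb y g \<in> Ek A" using lincomb_in_span[of y g] Uy by auto
    have 3: "V' j \<subseteq> Ek A" unfolding V'_def using J(3) Lg by (intro span_subset_Ek) auto
    have VV': "V j \<subseteq> V' j" unfolding V'_def using fs.span_superset by blast
    have 4: "Ek A \<subseteq> {a + b | a b. a \<in> V' j \<and> b \<in> fspan (set y)}" using J(4) VV' by blast
    have 5: "V' j \<inter> fspan (set y) = lincomb y ` fspan (set (Bj (step5 R g s) j))"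
    proof (cases "j \<in> R \<and> y \<noteq> []")
      case True
      have "V' j = fspan (V j \<union> lincomb y ` {g})" using True by (simp add: V'_def)
      then have "V' j \<inter> fspan (set y) = lincomb y ` fspan (set (Bj s j) \<union> {g})"
        using key5[OF J(2) J(5) J(1), of "{g}"] g by (simp add: y_def)
      also have "fspan (set (Bj s j) \<union> {g}) = fspan (set (Bj (step5 R g s) j))"
        using True by (cases "g = 0") (auto simp: step5_def)
      finally show ?thesis .
    next
      case False
      then have "g = 0 \<or> j \<notin> R"
        using g by (auto simp: Ek_def fun_eq_iff y_def)
      then have "Bj (step5 R g s) j = Bj s j" by (auto simp: q)
      moreover have "V' j = V j" using False J(2) unfolding V'_def by (simp only: if_False Un_empty_right) simp
      ultimately show ?thesis using J(5) by simp
    qed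
    show ?thesis using 1 2 3 4 5 by blast
  qed
  show ?thesis
    using y J unfolding inv0_def q V'_def y_def by simp
qed


lemma dim0_zero:
  fixes W :: "(nat \<Rightarrow> 'a::field) set"
  assumes "fdim W = 0" "W \<subseteq> fspan F" "finite F"
  shows "W \<subseteq> {0}"
proof -
  obtain B where B: "B \<subseteq> W" "findep B" "W \<subseteq> fspan B" "card B = fdim W"
    using fs.basis_exists by blast
  have "finite B" using fs.independent_span_bound[OF assms(3) B(2)] B(1) assms(2) by auto
  then have "B = {}" using B(4) assms(1) by simp
  then show ?thesis using B(3) by simp
qed

lemma span_disjoint_indep:
  fixes X Y :: "(nat \<Rightarrow> 'a::field) set"
  assumes "findep (X \<union> Y)" "X \<inter> Y = {}" "finite X" "finite Y"
  shows "fspan X \<inter> fspan Y = {0}"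
proof -
  have iX: "findep X" and iY: "findep Y" using assms(1) fs.independent_mono by blast+
  have eq: "fdim {a + b |a b. a \<in> fspan X \<and> b \<in> fspan Y} + fdim (fspan X \<inter> fspan Y)
      = fdim (fspan X) + fdim (fspan Y)"
    by (rule fs.dim_sums_Int_gen[OF fs.subspace_span fs.subspace_span order_refl order_refl assms(3,4)])
  have "{a + b |a b. a \<in> fspan X \<and> b \<in> fspan Y} = fspan (X \<union> Y)" by (simp add: fs.span_Un)
  then have "fdim {a + b |a b. a \<in> fspan X \<and> b \<in> fspan Y} = card X + card Y"
    using fs.dim_span_eq_card_independent[OF assms(1)] card_Un_disjoint[OF assms(3,4,2)] by simp
  moreover have "fdim (fspan X) = card X" "fdim (fspan Y) = card Y"
    using fs.dim_span_eq_card_independent iX iY by auto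
  ultimately have "fdim (fspan X \<inter> fspan Y) = 0" using eq by simp
  then have "fspan X \<inter> fspan Y \<subseteq> {0}" by (rule dim0_zero[of _ X]) (auto simp: assms(3))
  then show ?thesis using fs.span_zero by auto
qed

lemma inv_step678:
  fixes s :: "'a::field alg_state"
  assumes n: "n \<ge> 1" and inv: "inv0 n A s V" and v: "valid_steps678 n s s'"
  shows "inv n A s' V"
proof -
  define y where "y = queue s"
  define Q where "Q = length y"
  define L where "L = lincomb y"
  define T where "T = (\<lambda>j. fspan (set (Bj s j)))"
  obtain BD B2 Bj2 X where
    bD: "is_basis_list BD (\<Inter>j\<in>{1..n}. T j)" and
    b2: "is_basis_list (BD @ B2) (fspan (set (Bm s)))" and
    bj: "\<forall>j\<in>{1..n}. is_basis_list (BD @ Bj2 j) (T j) \<and> set (Bj2 j) \<subseteq> fspan (set B2)" and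
    X: "\<forall>j\<in>{1..n}. map (lincomb B2) (X j) = Bj2 j \<and> (\<forall>x\<in>set (X j). \<forall>k\<ge>length B2. x k = 0)" and
    q': "queue s' = map (lincomb (queue s)) B2" and
    bj': "Bj s' = X" and bm': "Bm s' = idrows (length B2)"
    using v unfolding valid_steps678_def T_def by blast
  have y: "distinct y" "findep (set y)" "set y \<subseteq> Ek A" "Bm s = idrows Q"
    using inv unfolding inv0_def y_def Q_def by auto
  define E where "E = (Ek Q :: (nat \<Rightarrow> 'a) set)"
  have spanBm: "fspan (set (Bm s)) = E" by (simp add: y(4) span_idrows E_def)
  have b2': "distinct (BD @ B2)" "findep (set BD \<union> set B2)" "fspan (set BD \<union> set B2) = E"
    using b2 spanBm unfolding is_basis_list_def by auto
  define D where "D = fspan (set BD)"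
  define P where "P = fspan (set B2)"
  have DP0: "D \<inter> P = {0}" unfolding D_def P_def
    by (rule span_disjoint_indep) (use b2' in auto)
  have DE: "D \<subseteq> E" and PE: "P \<subseteq> E" unfolding D_def P_def using b2'(3) fs.span_mono
    by (metis sup.cobounded1 sup.cobounded2)+
  have DT: "D = (\<Inter>j\<in>{1..n}. T j)" using bD unfolding is_basis_list_def D_def by simp
  have hom: "module_hom fscale fscale L" unfolding L_def by (rule lincomb_hom)
  have injL: "inj_on L E" unfolding L_def E_def Q_def by (rule lincomb_inj[OF y(1,2)])
  have UE: "fspan (set y) = L ` E" unfolding L_def E_def Q_def by (rule span_list_image)
  have B2E: "set B2 \<subseteq> E" using PE fs.span_superset unfolding P_def by blast
  define y' where "y' = map L B2"
  have qy': "queue s' = y'" using q' by (simp add: y'_def L_def y_def)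
  have iB2: "findep (set B2)" using b2'(2) fs.independent_mono by blast
  have dB2: "distinct B2" using b2'(1) by simp
  have d': "distinct y'" unfolding y'_def using dB2 inj_on_subset[OF injL B2E]
    by (simp add: distinct_map)
  have i': "findep (set y')" unfolding y'_def set_map
    by (rule module_hom.independent_injective_image[OF hom iB2]) (use injL PE P_def inj_on_subset in blast)
  have s': "set y' \<subseteq> Ek A" unfolding y'_def L_def
    using lincomb_in_span span_subset_Ek[OF y(3)] by auto
  have Lmap: "lincomb y' h = L (lincomb B2 h)" for h unfolding y'_def L_def by (rule lincomb_map)
  have U': "fspan (set y') = L ` P" unfolding y'_def set_map P_def
    by (rule module_hom.span_image[OF hom])
  have PLU: "L ` P \<subseteq> fspan (set y)" using UE PE by auto
  have T_E: "T j \<subseteq> E" if "j \<in> {1..n}" for j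
  proof -
    have "set (Bj s j) \<subseteq> Ek Q" using inv that unfolding inv0_def Q_def y_def by auto
    then show ?thesis unfolding T_def E_def by (rule span_subset_Ek)
  qed
  have S2: "T j \<inter> P = fspan (set (Bj2 j))" if j: "j \<in> {1..n}" for j
  proof -
    have bjj: "fspan (set BD \<union> set (Bj2 j)) = T j" "set (Bj2 j) \<subseteq> P"
      using bj j unfolding is_basis_list_def P_def by auto
    have sub: "fspan (set (Bj2 j)) \<subseteq> P" using bjj(2) unfolding P_def
      by (metis fs.span_minimal fs.subspace_span)
    show ?thesis
    proof
      show "T j \<inter> P \<subseteq> fspan (set (Bj2 j))"
      proof
        fix z assume z: "z \<in> T j \<inter> P"
        then obtain d w where dw: "z = d + w" "d \<in> D" "w \<in> fspan (set (Bj2 j))"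
          using fs.span_Un[of "set BD" "set (Bj2 j)"] bjj(1) unfolding D_def by auto
        have "d = z - w" using dw by simp
        then have "d \<in> P" using z sub dw(3) fs.span_diff unfolding P_def by auto
        then have "d = 0" using DP0 dw(2) by auto
        then show "z \<in> fspan (set (Bj2 j))" using dw by simp
      qed
      show "fspan (set (Bj2 j)) \<subseteq> T j \<inter> P"
        using sub bjj(1) fs.span_mono[of "set (Bj2 j)" "set BD \<union> set (Bj2 j)"] by auto
    qed
  qed
  have XE: "set (X j) \<subseteq> Ek (length B2)" if "j \<in> {1..n}" for j
    using X that by (auto simp: Ek_def)
  have imX: "lincomb B2 ` set (X j) = set (Bj2 j)" if "j \<in> {1..n}" for j
    using X that by (metis set_map)
  have J: "set (Bj s' j) \<subseteq> Ek (length y') \<and> fs.subspace (V j) \<and> V j \<subseteq> Ek A \<and>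
       Ek A \<subseteq> {a + b | a b. a \<in> V j \<and> b \<in> fspan (set y')} \<and>
       V j \<inter> fspan (set y') = lincomb y' ` fspan (set (Bj s' j))" if j: "j \<in> {1..n}" for j
  proof -
    have J: "fs.subspace (V j)" "V j \<subseteq> Ek A"
      "Ek A \<subseteq> {a + b | a b. a \<in> V j \<and> b \<in> fspan (set y)}"
      "V j \<inter> fspan (set y) = L ` T j"
      using inv j unfolding inv0_def y_def L_def T_def by auto
    have 1: "set (Bj s' j) \<subseteq> Ek (length y')" using XE[OF j] bj' by (simp add: y'_def)
    have 4: "Ek A \<subseteq> {a + b | a b. a \<in> V j \<and> b \<in> fspan (set y')}"
    proof
      fix v :: "nat \<Rightarrow> 'a" assume "v \<in> Ek A"
      then obtain x u where xu: "v = x + u" "x \<in> V j" "u \<in> fspan (set y)" using J(3) by blast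
      then obtain e where e: "u = L e" "e \<in> E" using UE by auto
      then obtain d p where dp: "e = d + p" "d \<in> D" "p \<in> P"
        using b2'(3) fs.span_Un[of "set BD" "set B2"] unfolding D_def P_def by auto
      have "d \<in> T j" using dp(2) DT j by auto
      then have "L d \<in> V j" using J(4) by auto
      then have "x + L d \<in> V j" using J(1) xu(2) by (simp add: fs.subspace_add)
      moreover have "L p \<in> fspan (set y')" using U' dp(3) by auto
      moreover have "v = (x + L d) + L p" using xu e dp module_hom.add[OF hom] by (simp add: add.assoc)
      ultimately show "v \<in> {a + b | a b. a \<in> V j \<and> b \<in> fspan (set y')}" by blast
    qed
    have "lincomb y' ` fspan (set (Bj s' j)) = L ` (lincomb B2 ` fspan (set (X j)))"
      using Lmap bj' by (auto simp: image_image)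
    also have "lincomb B2 ` fspan (set (X j)) = fspan (set (Bj2 j))"
      using module_hom.span_image[OF lincomb_hom, of B2 "set (X j)"] imX[OF j] by simp
    also have "fspan (set (Bj2 j)) = T j \<inter> P" using S2[OF j] by simp
    also have "L ` (T j \<inter> P) = L ` T j \<inter> L ` P"
      by (rule inj_on_image_Int[OF injL T_E[OF j] PE])
    also have "\<dots> = V j \<inter> fspan (set y')"
    proof -
      have "L ` T j \<inter> L ` P = (V j \<inter> fspan (set y)) \<inter> L ` P" using J(4) by simp
      also have "\<dots> = V j \<inter> L ` P" using PLU by blast
      finally show ?thesis using U' by simp
    qed
    finally have 5: "V j \<inter> fspan (set y') = lincomb y' ` fspan (set (Bj s' j))" by simp
    show ?thesis using 1 J(1,2) 4 5 by blast
  qed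
  have inter: "(\<Inter>j\<in>{1..n}. fspan (set (Bj s' j))) = {0}"
  proof
    show "{0} \<subseteq> (\<Inter>j\<in>{1..n}. fspan (set (Bj s' j)))" using fs.span_zero by auto
    show "(\<Inter>j\<in>{1..n}. fspan (set (Bj s' j))) \<subseteq> {0}"
    proof
      fix x assume x: "x \<in> (\<Inter>j\<in>{1..n}. fspan (set (Bj s' j)))"
      have j1: "1 \<in> {1..n}" using n by simp
      have xE: "x \<in> Ek (length B2)" using x j1 span_subset_Ek[OF XE[OF j1]] bj' by auto
      have "lincomb B2 x \<in> T j \<inter> P" if j: "j \<in> {1..n}" for j
      proof -
        have "x \<in> fspan (set (X j))" using x j bj' by auto
        then have "lincomb B2 x \<in> fspan (set (Bj2 j))"
          using module_hom.span_image[OF lincomb_hom, of B2 "set (X j)"] imX[OF j] by auto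
        then show ?thesis using S2[OF j] by simp
      qed
      then have "lincomb B2 x \<in> D \<inter> P" using DT j1 by auto
      then have "lincomb B2 x = 0" using DP0 by auto
      then have "x = 0" using lincomb_zero_imp[OF dB2 iB2 xE] by simp
      then show "x \<in> {0}" by simp
    qed
  qed
  show ?thesis
    unfolding inv_def inv0_def qy' using d' i' s' J inter bm' by (simp add: y'_def)
qed


lemma span_span_Un: "fspan (fspan S \<union> X) = fspan (S \<union> (X :: (nat \<Rightarrow> 'a::field) set))"
proof -
  have "fspan S \<union> X \<subseteq> fspan (S \<union> X)"
    using fs.span_mono[of S "S \<union> X"] fs.span_superset[of "S \<union> X"] by auto
  moreover have "S \<union> X \<subseteq> fspan (fspan S \<union> X)"
    using fs.span_superset[of S] fs.span_superset[of "fspan S \<union> X"] by auto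
  ultimately show ?thesis unfolding fs.span_eq by simp
qed

lemma rk_Suc:
  "receiver_knowledge a rcv g st j (Suc t) =
     fspan (receiver_knowledge a rcv g st j t \<union>
       (if j \<in> rcv t \<and> queue (after_step3 a st t) \<noteq> [] then {lincomb (queue (after_step3 a st t)) (g t)} else {}))"
proof -
  have "{transmitted a g st s | s. s < Suc t \<and> j \<in> rcv s \<and> queue (after_step3 a st s) \<noteq> []}
      = {transmitted a g st s | s. s < t \<and> j \<in> rcv s \<and> queue (after_step3 a st s) \<noteq> []} \<union>
        (if j \<in> rcv t \<and> queue (after_step3 a st t) \<noteq> [] then {lincomb (queue (after_step3 a st t)) (g t)} else {})"
    by (auto simp: less_Suc_eq transmitted_def)
  then show ?thesis unfolding receiver_knowledge_def by (simp only: span_span_Un)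
qed

lemma run_inv:
  fixes st :: "nat \<Rightarrow> 'a::field alg_state"
  assumes n: "n \<ge> 1" and run: "is_run n a rcv g st"
  shows "inv n (arrivals_before a t) (st t) (\<lambda>j. receiver_knowledge a rcv g st j t)"
proof (induction t)
  case 0
  have "st 0 = init_state" using run by (simp add: is_run_def)
  moreover have "(\<lambda>j. receiver_knowledge a rcv g st j 0) = (\<lambda>j. fspan {})"
    by (simp add: receiver_knowledge_def)
  ultimately show ?case using inv_init[OF n] by (simp add: arrivals_before_def)
next
  case (Suc t)
  define s where "s = after_step3 a st t"
  define V where "V = (\<lambda>j. receiver_knowledge a rcv g st j t)"
  have ab: "arrivals_before a (Suc t) = arrivals_before a t + a t" by (simp add: arrivals_before_def)
  have i3: "inv n (arrivals_before a (Suc t)) s V"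
    unfolding s_def after_step3_def ab V_def by (rule inv_step3[OF Suc.IH])
  have vg: "valid_g n s (g t)" and v678: "valid_steps678 n (step5 (rcv t) (g t) s) (st (Suc t))"
    using run by (auto simp: is_run_def s_def)
  have gE: "g t \<in> Ek (length (queue s))"
  proof (cases "queue s = []")
    case True then show ?thesis using vg by (simp add: valid_g_def Ek_def)
  next
    case False
    have "Bm s = idrows (length (queue s))" using i3 by (simp add: inv_def inv0_def)
    then show ?thesis using vg False by (simp add: valid_g_def span_idrows)
  qed
  have i5: "inv0 n (arrivals_before a (Suc t)) (step5 (rcv t) (g t) s)
           (\<lambda>j. fspan (V j \<union> (if j \<in> rcv t \<and> queue s \<noteq> [] then {lincomb (queue s) (g t)} else {})))"
    by (rule inv_step5[OF _ gE]) (use i3 in \<open>simp add: inv_def\<close>)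
  have "(\<lambda>j. fspan (V j \<union> (if j \<in> rcv t \<and> queue s \<noteq> [] then {lincomb (queue s) (g t)} else {})))
        = (\<lambda>j. receiver_knowledge a rcv g st j (Suc t))"
    unfolding s_def V_def by (simp add: rk_Suc)
  then show ?case using inv_step678[OF n i5 v678] by simp
qed

theorem theorem2:
  fixes n :: nat and a :: "nat \<Rightarrow> nat" and rcv :: "nat \<Rightarrow> nat set"
    and g :: "nat \<Rightarrow> nat \<Rightarrow> 'a::{field, finite}" and st :: "nat \<Rightarrow> 'a alg_state"
  assumes "n \<ge> 1"
    and "card (UNIV :: 'a set) > n"
    and "is_run n a rcv g st"
  shows "int (length (queue (after_step3 a st t)))
           \<le> (\<Sum>j=1..n. int (fdim (sender_knowledge a t))
                        - int (fdim (receiver_knowledge a rcv g st j t)))"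
proof -
  have ta: "total_arrivals a t = arrivals_before a t + a t"
    by (simp add: total_arrivals_def arrivals_before_def lessThan_Suc_atMost[symmetric])
  have "inv n (total_arrivals a t) (after_step3 a st t) (\<lambda>j. receiver_knowledge a rcv g st j t)"
    unfolding ta after_step3_def by (rule inv_step3[OF run_inv[OF assms(1,3)]])
  from inv_bound[OF this assms(1)] show ?thesis
    by (simp add: sender_knowledge_def Ek_def[symmetric] dim_Ek)
qed

end
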